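(* For any instance of the Max-Cut problem on a graph with $n$ vertices, the DLA of QWOA satisfies $\dim(\mathfrak g_{\mathrm{QWOA,Max\text{-}Cut}})=\mathcal O(n^4)$.
   Context: Max-Cut on an undirected simple graph $G=(V,E)$, $V=\{1,\dots,n\}$: feasible solutions are all $z\in\{0,1\}^n$ and the cost $C(z)$ is the number of edges $\{u,v\}$ with $z_u\ne z_v$. On $\mathbb C^{2^n}$, $H_C$ is diagonal with $H_C|z\rangle=C(z)|z\rangle$ and $H_M$ is the $2^n\times 2^n$ all-ones matrix (equivalent up to identity to the complete-graph adjacency matrix). $\mathfrak g_{\mathrm{QWOA,Max\text{-}Cut}}$ is the real Lie algebra generated by $iH_C$ and $iH_M$ (smallest real subspace containing them and closed under commutators); its dimension is its real dimension. *)

theory Defs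
  imports Complex_Main "HOL-Library.Function_Algebras"
begin

text \<open>Computational basis states |z>, z in {0,1}^n, are encoded by the set
  S = {v in {1..n}. z_v = 1} in Pow {1..n}.  Operators on C^(2^n) are encoded as
  complex matrices indexed by such sets, i.e. functions nat set => nat set => complex
  that vanish outside Pow {1..n} x Pow {1..n}.  The pointwise algebraic structure
  on functions (Function_Algebras) gives the additive group; real scalar
  multiplication is rscale.\<close>

type_synonym cmat = "nat set \<Rightarrow> nat set \<Rightarrow> complex"

definition basis_states :: "nat \<Rightarrow> nat set set" where
  "basis_states n = Pow {1..n}"

definition simple_graph :: "nat \<Rightarrow> (nat \<Rightarrow> nat \<Rightarrow> bool) \<Rightarrow> bool" where
  "simple_graph n E \<longleftrightarrow> (\<forall>u v. E u v \<longrightarrow> E v u) \<and> (\<forall>u. \<not> E u u)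
     \<and> (\<forall>u v. E u v \<longrightarrow> u \<in> {1..n} \<and> v \<in> {1..n})"

definition cut_value :: "nat \<Rightarrow> (nat \<Rightarrow> nat \<Rightarrow> bool) \<Rightarrow> nat set \<Rightarrow> nat" where
  "cut_value n E S = card {(u, v). 1 \<le> u \<and> u < v \<and> v \<le> n \<and> E u v \<and> ((u \<in> S) \<noteq> (v \<in> S))}"

definition H_C :: "nat \<Rightarrow> (nat \<Rightarrow> nat \<Rightarrow> bool) \<Rightarrow> cmat" where
  "H_C n E = (\<lambda>S T. if S = T \<and> S \<in> basis_states n then of_nat (cut_value n E S) else 0)"

definition H_M :: "nat \<Rightarrow> cmat" where
  "H_M n = (\<lambda>S T. if S \<in> basis_states n \<and> T \<in> basis_states n then 1 else 0)"

definition mmul :: "nat \<Rightarrow> cmat \<Rightarrow> cmat \<Rightarrow> cmat" where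
  "mmul n A B = (\<lambda>S T. \<Sum>R\<in>basis_states n. A S R * B R T)"

definition commutator :: "nat \<Rightarrow> cmat \<Rightarrow> cmat \<Rightarrow> cmat" where
  "commutator n A B = mmul n A B - mmul n B A"

definition smul_i :: "cmat \<Rightarrow> cmat" where
  "smul_i A = (\<lambda>S T. \<i> * A S T)"

definition rscale :: "real \<Rightarrow> cmat \<Rightarrow> cmat" where
  "rscale r A = (\<lambda>S T. complex_of_real r * A S T)"

definition qwoa_dla :: "nat \<Rightarrow> (nat \<Rightarrow> nat \<Rightarrow> bool) \<Rightarrow> cmat set" where
  "qwoa_dla n E = \<Inter> {L. module.subspace rscale L
       \<and> smul_i (H_C n E) \<in> L \<and> smul_i (H_M n) \<in> L
       \<and> (\<forall>A\<in>L. \<forall>B\<in>L. commutator n A B \<in> L)}"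

definition real_dim :: "cmat set \<Rightarrow> nat" where
  "real_dim L = vector_space.dim rscale L"

end

theory Submission
  imports Defs
begin

interpretation rs: vector_space rscale
  by unfold_locales (auto simp: rscale_def fun_eq_iff algebra_simps)

lemma sum_fun_apply2: "(sum F A) x y = sum (\<lambda>a. F a x y) A"
  by (induction A rule: infinite_finite_induct) auto

definition Bf :: "nat \<Rightarrow> (nat \<Rightarrow> nat \<Rightarrow> bool) \<Rightarrow> (nat \<Rightarrow> nat \<Rightarrow> complex) \<Rightarrow> cmat" where
  "Bf n E f = (\<lambda>S T. if S \<in> basis_states n \<and> T \<in> basis_states n
      then f (cut_value n E S) (cut_value n E T) else 0)"

lemma mmul_add_left: "mmul n (A + B) C = mmul n A C + mmul n B C"
  by (simp add: mmul_def fun_eq_iff distrib_right sum.distrib)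
lemma mmul_add_right: "mmul n C (A + B) = mmul n C A + mmul n C B"
  by (simp add: mmul_def fun_eq_iff distrib_left sum.distrib)
lemma mmul_scale_left: "mmul n (rscale r A) C = rscale r (mmul n A C)"
  by (simp add: mmul_def rscale_def fun_eq_iff sum_distrib_left mult.assoc)
lemma mmul_scale_right: "mmul n C (rscale r A) = rscale r (mmul n C A)"
  by (simp add: mmul_def rscale_def fun_eq_iff sum_distrib_left algebra_simps)

lemma mmul_Bf_Bf: "mmul n (Bf n E f) (Bf n E g) =
   Bf n E (\<lambda>j l. \<Sum>R\<in>basis_states n. f j (cut_value n E R) * g (cut_value n E R) l)"
  by (auto simp: mmul_def Bf_def fun_eq_iff intro!: sum.cong)

lemma mmul_X_Bf: "mmul n (smul_i (H_C n E)) (Bf n E g) =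
   Bf n E (\<lambda>j l. \<i> * of_nat j * g j l)"
proof -
  have "(\<Sum>R\<in>basis_states n. smul_i (H_C n E) S R * Bf n E g R T) =
     Bf n E (\<lambda>j l. \<i> * of_nat j * g j l) S T" for S T
  proof (cases "S \<in> basis_states n")
    case True
    have "(\<Sum>R\<in>basis_states n. smul_i (H_C n E) S R * Bf n E g R T) =
       (\<Sum>R\<in>basis_states n. if S = R then \<i> * of_nat (cut_value n E S) * Bf n E g S T else 0)"
      by (rule sum.cong) (auto simp: smul_i_def H_C_def)
    also have "\<dots> = \<i> * of_nat (cut_value n E S) * Bf n E g S T"
      using True by (simp add: basis_states_def)
    finally show ?thesis using True by (simp add: Bf_def)
  next
    case False
    then show ?thesis by (simp add: smul_i_def H_C_def Bf_def)
  qed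
  then show ?thesis by (simp add: mmul_def fun_eq_iff)
qed

lemma mmul_Bf_X: "mmul n (Bf n E f) (smul_i (H_C n E)) =
   Bf n E (\<lambda>j l. f j l * \<i> * of_nat l)"
proof -
  have "(\<Sum>R\<in>basis_states n. Bf n E f S R * smul_i (H_C n E) R T) =
     Bf n E (\<lambda>j l. f j l * \<i> * of_nat l) S T" for S T
  proof (cases "T \<in> basis_states n")
    case True
    have "(\<Sum>R\<in>basis_states n. Bf n E f S R * smul_i (H_C n E) R T) =
       (\<Sum>R\<in>basis_states n. if R = T then Bf n E f S T * \<i> * of_nat (cut_value n E T) else 0)"
      by (rule sum.cong) (auto simp: smul_i_def H_C_def)
    also have "\<dots> = Bf n E f S T * \<i> * of_nat (cut_value n E T)"
      using True by (simp add: basis_states_def)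
    finally show ?thesis using True by (simp add: Bf_def)
  next
    case False
    then show ?thesis by (auto simp: smul_i_def H_C_def Bf_def intro!: sum.neutral)
  qed
  then show ?thesis by (simp add: mmul_def fun_eq_iff)
qed

definition L0 :: "nat \<Rightarrow> (nat \<Rightarrow> nat \<Rightarrow> bool) \<Rightarrow> cmat set" where
  "L0 n E = {A. \<exists>r f. A = rscale r (smul_i (H_C n E)) + Bf n E f}"

lemma comm_L0:
  fixes r r' :: real and f g :: "nat \<Rightarrow> nat \<Rightarrow> complex"
  shows "commutator n (rscale r (smul_i (H_C n E)) + Bf n E f) (rscale r' (smul_i (H_C n E)) + Bf n E g) =
    Bf n E (\<lambda>j l. r * \<i> * j * g j l + r' * f j l * \<i> * l
        + (\<Sum>R\<in>basis_states n. f j (cut_value n E R) * g (cut_value n E R) l)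
      - (r' * \<i> * j * f j l + r * g j l * \<i> * l
        + (\<Sum>R\<in>basis_states n. g j (cut_value n E R) * f (cut_value n E R) l)))"
  unfolding commutator_def
  by (simp add: mmul_add_left mmul_add_right mmul_scale_left mmul_scale_right
      mmul_Bf_Bf mmul_X_Bf mmul_Bf_X)
     (simp add: fun_eq_iff rscale_def Bf_def algebra_simps)

lemma Bf_in_L0: "Bf n E h \<in> L0 n E"
  unfolding L0_def
  by (intro CollectI exI[of _ 0] exI[of _ h]) (simp add: fun_eq_iff rscale_def)

lemma L0_dla: "qwoa_dla n E \<subseteq> L0 n E"
proof -
  let ?X = "smul_i (H_C n E)"
  have sub: "rs.subspace (L0 n E)"
  proof (rule rs.subspaceI)
    show "0 \<in> L0 n E" unfolding L0_def
      by (rule CollectI, rule exI[of _ 0], rule exI[of _ "\<lambda>_ _. 0"])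
         (simp add: fun_eq_iff rscale_def Bf_def)
  next
    fix x y assume "x \<in> L0 n E" "y \<in> L0 n E"
    then obtain r f r' g where "x = rscale r ?X + Bf n E f" "y = rscale r' ?X + Bf n E g"
      unfolding L0_def by blast
    then show "x + y \<in> L0 n E" unfolding L0_def
      by (intro CollectI exI[of _ "r + r'"] exI[of _ "\<lambda>j l. f j l + g j l"])
         (simp add: fun_eq_iff rscale_def Bf_def algebra_simps)
  next
    fix c x assume "x \<in> L0 n E"
    then obtain r f where "x = rscale r ?X + Bf n E f"
      unfolding L0_def by blast
    then show "rscale c x \<in> L0 n E" unfolding L0_def
      by (intro CollectI exI[of _ "c * r"] exI[of _ "\<lambda>j l. c * f j l"])
         (simp add: fun_eq_iff rscale_def Bf_def algebra_simps)
  qed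
  have g1: "?X \<in> L0 n E" unfolding L0_def
    by (intro CollectI exI[of _ 1] exI[of _ "\<lambda>_ _. 0"])
       (simp add: fun_eq_iff rscale_def Bf_def)
  have g2: "smul_i (H_M n) \<in> L0 n E" unfolding L0_def
    by (intro CollectI exI[of _ 0] exI[of _ "\<lambda>_ _. \<i>"])
       (simp add: fun_eq_iff rscale_def Bf_def smul_i_def H_M_def)
  have cl: "\<forall>A\<in>L0 n E. \<forall>B\<in>L0 n E. commutator n A B \<in> L0 n E"
  proof (intro ballI)
    fix x y assume "x \<in> L0 n E" "y \<in> L0 n E"
    then obtain r f r' g where xy: "x = rscale r ?X + Bf n E f" "y = rscale r' ?X + Bf n E g"
      unfolding L0_def by blast
    show "commutator n x y \<in> L0 n E"
      unfolding xy by (simp only: comm_L0 Bf_in_L0)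
  qed
  show ?thesis unfolding qwoa_dla_def using sub g1 g2 cl by blast
qed

lemma cut_le: "cut_value n E S \<le> n * n"
proof -
  have "{(u, v). 1 \<le> u \<and> u < v \<and> v \<le> n \<and> E u v \<and> ((u \<in> S) \<noteq> (v \<in> S))}
        \<subseteq> {1..n} \<times> {1..n}" by auto
  then have "cut_value n E S \<le> card ({1..n} \<times> {1..n})"
    unfolding cut_value_def by (intro card_mono) auto
  then show ?thesis by (simp add: card_cartesian_product)
qed

definition ee :: "nat \<Rightarrow> nat \<Rightarrow> nat \<Rightarrow> nat \<Rightarrow> complex" where
  "ee j l = (\<lambda>a b. if a = j \<and> b = l then 1 else 0)"

definition Gs :: "nat \<Rightarrow> (nat \<Rightarrow> nat \<Rightarrow> bool) \<Rightarrow> cmat set" where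
  "Gs n E = insert (smul_i (H_C n E))
     ((\<lambda>(j,l). Bf n E (ee j l)) ` ({0..n*n} \<times> {0..n*n}) \<union>
      (\<lambda>(j,l). Bf n E (\<lambda>a b. \<i> * ee j l a b)) ` ({0..n*n} \<times> {0..n*n}))"

lemma Bf_span: "Bf n E f \<in> rs.span (Gs n E)"
proof -
  let ?K = "n * n"
  let ?R = "\<Sum>j\<in>{0..?K}. \<Sum>l\<in>{0..?K}. rscale (Re (f j l)) (Bf n E (ee j l))
      + rscale (Im (f j l)) (Bf n E (\<lambda>a b. \<i> * ee j l a b))"
  have "?R \<in> rs.span (Gs n E)"
  proof (intro rs.span_sum rs.span_add rs.span_scale rs.span_base)
    fix j l assume "j \<in> {0..?K}" "l \<in> {0..?K}"
    then show "Bf n E (ee j l) \<in> Gs n E" "Bf n E (\<lambda>a b. \<i> * ee j l a b) \<in> Gs n E"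
      unfolding Gs_def by force+
  qed
  moreover have "?R = Bf n E f"
  proof (intro ext)
    fix S T
    show "?R S T = Bf n E f S T"
    proof (cases "S \<in> basis_states n \<and> T \<in> basis_states n")
      case True
      let ?a = "cut_value n E S" and ?b = "cut_value n E T"
      have "?R S T = (\<Sum>j\<in>{0..?K}. \<Sum>l\<in>{0..?K}. if j = ?a then (if l = ?b then f j l else 0) else 0)"
        using True
        by (simp add: sum_fun_apply2 rscale_def Bf_def ee_def)
           (intro sum.cong refl, auto simp: complex_eq[of "f _ _", symmetric] algebra_simps
              simp flip: complex_eq)
      also have "\<dots> = (\<Sum>j\<in>{0..?K}. if j = ?a then f j ?b else 0)"
        using cut_le[of n E T] by (intro sum.cong refl) (simp add: sum.delta)
      also have "\<dots> = f ?a ?b"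
        using cut_le[of n E S] by (simp add: sum.delta)
      finally show ?thesis using True by (simp add: Bf_def)
    next
      case False
      then show ?thesis by (auto simp: sum_fun_apply2 rscale_def Bf_def)
    qed
  qed
  ultimately show ?thesis by simp
qed

lemma L0_span: "L0 n E \<subseteq> rs.span (Gs n E)"
proof
  fix x assume "x \<in> L0 n E"
  then obtain r f where x: "x = rscale r (smul_i (H_C n E)) + Bf n E f" unfolding L0_def by blast
  have "smul_i (H_C n E) \<in> rs.span (Gs n E)" unfolding Gs_def by (intro rs.span_base) simp
  then show "x \<in> rs.span (Gs n E)" unfolding x
    by (intro rs.span_add rs.span_scale Bf_span)
qed

lemma card_Gs: "card (Gs n E) \<le> 1 + 2 * (n * n + 1)^2"
proof -
  let ?P = "{0..n*n} \<times> {0..n*n}"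
  have cP: "card ?P = (n*n+1)^2" by (simp add: card_cartesian_product power2_eq_square)
  have "card (Gs n E) \<le> 1 + card ((\<lambda>(j,l). Bf n E (ee j l)) ` ?P \<union>
      (\<lambda>(j,l). Bf n E (\<lambda>a b. \<i> * ee j l a b)) ` ?P)"
    unfolding Gs_def by (rule card_insert_le_m1) auto
  also have "\<dots> \<le> 1 + (card ((\<lambda>(j,l). Bf n E (ee j l)) ` ?P) +
      card ((\<lambda>(j,l). Bf n E (\<lambda>a b. \<i> * ee j l a b)) ` ?P))"
    using card_Un_le by simp
  also have "\<dots> \<le> 1 + (card ?P + card ?P)"
    by (intro add_left_mono add_mono card_image_le) auto
  finally show ?thesis using cP by simp
qed

lemma finite_Gs: "finite (Gs n E)" unfolding Gs_def by auto

lemma main_bound: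
  fixes n :: nat assumes n: "n \<ge> 1"
  shows "real (real_dim (qwoa_dla n E)) \<le> 9 * real n ^ 4"
proof -
  have "real_dim (qwoa_dla n E) \<le> card (Gs n E)"
    unfolding real_dim_def
    using L0_dla L0_span finite_Gs by (intro rs.dim_le_card) blast+
  also have "\<dots> \<le> 1 + 2 * (n * n + 1)^2" by (rule card_Gs)
  also have "\<dots> \<le> 9 * n ^ 4"
  proof -
    define m where "m = n * n"
    have m1: "1 \<le> m" using n by (simp add: m_def)
    then have m2: "m \<le> m * m" by simp
    have "1 + 2 * (m + 1)^2 \<le> 9 * (m * m)"
    proof -
      have "(m + 1)^2 = m * m + 2 * m + 1" by (simp add: power2_eq_square algebra_simps)
      then show ?thesis using m1 m2 by linarith
    qed
    moreover have "n ^ 4 = m * m" by (simp add: m_def power4_eq_xxxx)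
    ultimately show ?thesis by (simp add: m_def)
  qed
  finally have "real_dim (qwoa_dla n E) \<le> 9 * n ^ 4" .
  then show ?thesis
    by (metis of_nat_le_iff of_nat_mult of_nat_numeral of_nat_power)
qed

theorem corollary3:
  shows "\<exists>(c::real) (N::nat). \<forall>n \<ge> N. \<forall>E. simple_graph n E \<longrightarrow>
           real (real_dim (qwoa_dla n E)) \<le> c * real n ^ 4"
  using main_bound by blast

end
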